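(* Let $Z=(Z_t)_{t\ge0}$ be an irreducible continuous-time Markov chain on $\mathbb{N}_+$ with jump rates $(q_{ij})$ and generator $\mathscr{L}g(n)=\sum_{j\ne n}q_{nj}(g(j)-g(n))$ (possibly explosive). Suppose there exist a bounded strictly positive function $g$ on $\mathbb{N}_+$ with $\lim_{n\to\infty}g(n)=0$ and an eventually strictly positive function $d$ on $\mathbb{N}_+$ such that for all sufficiently large $a$, $\mathscr{L}g(n)\le d(a)g(n)$ holds for all $n>a$. Then for all $a,t>0$, $$\lim_{n\to\infty}\mathbf{P}_n\{\kappa_a^-<t\wedge\kappa_\infty^+\}=0.$$
   Context: $\mathbf{P}_n$ is the law of $Z$ started from $Z_0=n$. $\kappa_a^-=\inf\{t>0:Z_t\le a\}$, $\kappa_b^+=\inf\{t>0:Z_t\ge b\}$, and $\kappa_\infty^+=\lim_{b\to\infty}\kappa_b^+$ (the explosion time). *)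

theory Defs
  imports "HOL-Probability.Probability"
begin

definition states :: "nat set" where "states = {1..}"

definition qtot :: "(nat \<Rightarrow> nat \<Rightarrow> real) \<Rightarrow> nat \<Rightarrow> real" where
  "qtot q i = infsum (\<lambda>j. q i j) (states - {i})"

definition gen :: "(nat \<Rightarrow> nat \<Rightarrow> real) \<Rightarrow> (nat \<Rightarrow> real) \<Rightarrow> nat \<Rightarrow> real" where
  "gen q g n = infsum (\<lambda>j. q n j * (g j - g n)) (states - {n})"

definition irreducible_rates :: "(nat \<Rightarrow> nat \<Rightarrow> real) \<Rightarrow> bool" where
  "irreducible_rates q \<longleftrightarrow>
     (\<forall>i\<in>states. \<forall>j\<in>states.
        (i, j) \<in> {(k, l). k \<in> states \<and> l \<in> states \<and> k \<noteq> l \<and> q k l > 0}\<^sup>*)"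

text \<open>Canonical construction of the (minimal) chain: an i.i.d. stream of pairs (U_k, V_k),
  uniform on (0,1)^2. The embedded jump chain moves from i to j with probability q i j / q_i
  (inverse-CDF selection with U_k) and the k-th holding time is -ln V_k / q_{X_k},
  exponential with rate q_{X_k}.\<close>

definition unif01 :: "real measure" where
  "unif01 = uniform_measure lborel {0<..<1}"

definition path_space :: "(real \<times> real) stream measure" where
  "path_space = stream_space (unif01 \<Otimes>\<^sub>M unif01)"

definition jump_step :: "(nat \<Rightarrow> nat \<Rightarrow> real) \<Rightarrow> nat \<Rightarrow> real \<Rightarrow> nat" where
  "jump_step q i u =
     (LEAST j. j \<in> states \<and> j \<noteq> i \<and> u * qtot q i < (\<Sum>k\<in>{1..j} - {i}. q i k))"

primrec jump_chain :: "(nat \<Rightarrow> nat \<Rightarrow> real) \<Rightarrow> nat \<Rightarrow> (real \<times> real) stream \<Rightarrow> nat \<Rightarrow> nat" where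
  "jump_chain q n \<omega> 0 = n"
| "jump_chain q n \<omega> (Suc k) = jump_step q (jump_chain q n \<omega> k) (fst (\<omega> !! k))"

definition hold :: "(nat \<Rightarrow> nat \<Rightarrow> real) \<Rightarrow> nat \<Rightarrow> (real \<times> real) stream \<Rightarrow> nat \<Rightarrow> real" where
  "hold q n \<omega> k = - ln (snd (\<omega> !! k)) / qtot q (jump_chain q n \<omega> k)"

definition jump_time :: "(nat \<Rightarrow> nat \<Rightarrow> real) \<Rightarrow> nat \<Rightarrow> (real \<times> real) stream \<Rightarrow> nat \<Rightarrow> real" where
  "jump_time q n \<omega> k = (\<Sum>i<k. hold q n \<omega> i)"

definition explosion_time :: "(nat \<Rightarrow> nat \<Rightarrow> real) \<Rightarrow> nat \<Rightarrow> (real \<times> real) stream \<Rightarrow> ereal" where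
  "explosion_time q n \<omega> = (SUP k. ereal (jump_time q n \<omega> k))"

text \<open>Z_s = X_k for J_k <= s < J_{k+1}, s < kappa_infinity. Hence
  kappa_a^- = inf {s > 0. Z_s <= a} = J_k for the first k with X_k <= a (infinite if none), and
  the event {kappa_a^- < t /\ kappa_infinity^+} is the following set.\<close>
definition hit_below_event ::
  "(nat \<Rightarrow> nat \<Rightarrow> real) \<Rightarrow> nat \<Rightarrow> real \<Rightarrow> real \<Rightarrow> (real \<times> real) stream set" where
  "hit_below_event q n a t =
     {\<omega> \<in> space path_space. \<exists>k. real (jump_chain q n \<omega> k) \<le> a
          \<and> jump_time q n \<omega> k < t \<and> ereal (jump_time q n \<omega> k) < explosion_time q n \<omega>}"

end

theory Submission
  imports Defs
begin


lemma space_unif01[simp]: "space unif01 = UNIV"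
  by (simp add: unif01_def)
lemma sets_unif01[simp, measurable_cong]: "sets unif01 = sets borel"
  by (simp add: unif01_def)

lemma prob_unif01: "prob_space unif01"
  unfolding unif01_def by (rule prob_space_uniform_measure) auto

lemma prob_pair01: "prob_space (unif01 \<Otimes>\<^sub>M unif01)"
  by (intro prob_space_pair prob_unif01)

lemma prob_path: "prob_space path_space"
  unfolding path_space_def using prob_pair01 by (rule prob_space.prob_space_stream_space)

lemma space_path[simp]: "space path_space = UNIV"
  by (simp add: path_space_def space_stream_space space_pair_measure)

lemma measurable_jump_step[measurable]:
  "jump_step q i \<in> borel \<rightarrow>\<^sub>M count_space UNIV"
  unfolding jump_step_def[abs_def] by measurable

lemma measurable_jump_chain[measurable]:
  "(\<lambda>\<omega>. jump_chain q n \<omega> k) \<in> path_space \<rightarrow>\<^sub>M count_space UNIV"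
proof (induction k)
  case 0 then show ?case by simp
next
  case (Suc k)
  have *: "(\<lambda>\<omega>. fst (\<omega> !! k)) \<in> path_space \<rightarrow>\<^sub>M borel"
    unfolding path_space_def by measurable
  show ?case
    by (simp, rule measurable_compose_countable'[where I=UNIV, OF _ Suc])
       (auto intro: measurable_compose[OF * measurable_jump_step])
qed

lemma measurable_hold[measurable]:
  "(\<lambda>\<omega>. hold q n \<omega> k) \<in> path_space \<rightarrow>\<^sub>M borel"
proof -
  have *: "(\<lambda>\<omega>. snd (\<omega> !! k)) \<in> path_space \<rightarrow>\<^sub>M borel"
    unfolding path_space_def by measurable
  show ?thesis unfolding hold_def
  proof (rule measurable_compose_countable'[where I=UNIV and g="\<lambda>\<omega>. jump_chain q n \<omega> k"
          and f="\<lambda>i \<omega>. - ln (snd (\<omega> !! k)) / qtot q i"])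
    fix i show "(\<lambda>\<omega>. - ln (snd (\<omega> !! k)) / qtot q i) \<in> borel_measurable path_space"
      using * by measurable
  qed auto
qed

lemma measurable_jump_time[measurable]:
  "(\<lambda>\<omega>. jump_time q n \<omega> k) \<in> path_space \<rightarrow>\<^sub>M borel"
  unfolding jump_time_def by measurable

lemma jump_chain_Stream: "jump_chain q n (x ## \<omega>) (Suc k) = jump_chain q (jump_step q n (fst x)) \<omega> k"
  by (induction k) auto

lemma hold_Stream: "hold q n (x ## \<omega>) (Suc k) = hold q (jump_step q n (fst x)) \<omega> k"
  by (simp only: hold_def jump_chain_Stream snth.simps stream.sel)

lemma hold_Stream0: "hold q n (x ## \<omega>) 0 = - ln (snd x) / qtot q n"
  by (simp only: hold_def jump_chain.simps snth.simps stream.sel)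

lemma jump_time_Stream: "jump_time q n (x ## \<omega>) (Suc k) =
   - ln (snd x) / qtot q n + jump_time q (jump_step q n (fst x)) \<omega> k"
  unfolding jump_time_def sum.lessThan_Suc_shift hold_Stream hold_Stream0 by (rule refl)

lemma ex_le_Suc: "(\<exists>k\<le>Suc m. P k) \<longleftrightarrow> P 0 \<or> (\<exists>k\<le>m. P (Suc k))"
  apply auto
  subgoal for k by (cases k) auto
  done

definition E :: "(nat \<Rightarrow> nat \<Rightarrow> real) \<Rightarrow> nat \<Rightarrow> nat \<Rightarrow> nat \<Rightarrow> real \<Rightarrow> (real \<times> real) stream set" where
  "E q a m i s = {\<omega>. \<exists>k\<le>m. jump_chain q i \<omega> k \<le> a \<and> jump_time q i \<omega> k < s}"

lemma E_sets[measurable]: "E q a m i s \<in> sets path_space"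
proof -
  have "E q a m i s = (\<Union>k\<in>{..m}. {\<omega>\<in>space path_space. jump_chain q i \<omega> k \<le> a \<and> jump_time q i \<omega> k < s})"
    by (auto simp: E_def)
  also have "\<dots> \<in> sets path_space" by measurable
  finally show ?thesis .
qed

lemma E_Stream: "(x ## \<omega>) \<in> E q a (Suc m) i s \<longleftrightarrow>
   (i \<le> a \<and> 0 < s) \<or> \<omega> \<in> E q a m (jump_step q i (fst x)) (s + ln (snd x) / qtot q i)"
proof -
  have "(x ## \<omega>) \<in> E q a (Suc m) i s \<longleftrightarrow>
    (\<exists>k\<le>Suc m. jump_chain q i (x ## \<omega>) k \<le> a \<and> jump_time q i (x ## \<omega>) k < s)"
    by (simp add: E_def)
  also have "\<dots> \<longleftrightarrow> (i \<le> a \<and> 0 < s) \<or> (\<exists>k\<le>m. jump_chain q i (x ## \<omega>) (Suc k) \<le> a \<and> jump_time q i (x ## \<omega>) (Suc k) < s)"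
    unfolding ex_le_Suc by (simp add: jump_time_def)
  also have "\<dots> \<longleftrightarrow> (i \<le> a \<and> 0 < s) \<or> \<omega> \<in> E q a m (jump_step q i (fst x)) (s + ln (snd x) / qtot q i)"
  proof -
    have ar: "\<And>J. (- ln (snd x) / qtot q i + J < s) = (J < s + ln (snd x) / qtot q i)" by linarith
    show ?thesis unfolding E_def mem_Collect_eq jump_chain_Stream jump_time_Stream ar by (rule refl)
  qed
  finally show ?thesis .
qed

lemma E_ind_meas: "indicator (E q a m i s) \<in> borel_measurable (stream_space (unif01 \<Otimes>\<^sub>M unif01))"
  using E_sets[of q a m i s] unfolding path_space_def by (rule borel_measurable_indicator)

lemma E_ind_T: "i \<le> a \<and> 0 < s \<Longrightarrow> (\<lambda>\<omega>. indicator (E q a (Suc m) i s) (x ## \<omega>) :: ennreal) = (\<lambda>_. 1)"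
  by (rule ext) (simp add: E_Stream)

lemma E_ind_F: "\<not> (i \<le> a \<and> 0 < s) \<Longrightarrow> (\<lambda>\<omega>. indicator (E q a (Suc m) i s) (x ## \<omega>) :: ennreal) =
         indicator (E q a m (jump_step q i (fst x)) (s + ln (snd x) / qtot q i))"
  by (rule ext) (simp add: E_Stream indicator_def)

lemma E_rec: "emeasure path_space (E q a (Suc m) i s) =
  (\<integral>\<^sup>+x. (if i \<le> a \<and> 0 < s then 1 else
      emeasure path_space (E q a m (jump_step q i (fst x)) (s + ln (snd x) / qtot q i))) \<partial>(unif01 \<Otimes>\<^sub>M unif01))"
proof -
  interpret P: prob_space "unif01 \<Otimes>\<^sub>M unif01" by (rule prob_pair01)
  have S1: "emeasure path_space (space path_space) = 1"
    using prob_path by (rule prob_space.emeasure_space_1)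
  have "emeasure path_space (E q a (Suc m) i s) = (\<integral>\<^sup>+\<omega>. indicator (E q a (Suc m) i s) \<omega> \<partial>path_space)"
    by (rule nn_integral_indicator[symmetric, OF E_sets])
  also have "\<dots> = (\<integral>\<^sup>+x. (\<integral>\<^sup>+\<omega>. indicator (E q a (Suc m) i s) (x ## \<omega>) \<partial>path_space) \<partial>(unif01 \<Otimes>\<^sub>M unif01))"
    unfolding path_space_def by (rule P.nn_integral_stream_space[OF E_ind_meas])
  also have "\<dots> = (\<integral>\<^sup>+x. (if i \<le> a \<and> 0 < s then 1 else
      emeasure path_space (E q a m (jump_step q i (fst x)) (s + ln (snd x) / qtot q i))) \<partial>(unif01 \<Otimes>\<^sub>M unif01))"
  proof (rule nn_integral_cong)
    fix x
    show "(\<integral>\<^sup>+\<omega>. indicator (E q a (Suc m) i s) (x ## \<omega>) \<partial>path_space) = (if i \<le> a \<and> 0 < s then 1 else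
      emeasure path_space (E q a m (jump_step q i (fst x)) (s + ln (snd x) / qtot q i)))"
    proof (cases "i \<le> a \<and> 0 < s")
      case True
      show ?thesis unfolding E_ind_T[OF True] if_P[OF True] nn_integral_const S1 by simp
    next
      case False
      show ?thesis unfolding E_ind_F[OF False] if_not_P[OF False]
        by (rule nn_integral_indicator[OF E_sets])
    qed
  qed
  finally show ?thesis by this
qed




locale chain =
  fixes q :: "nat \<Rightarrow> nat \<Rightarrow> real" and g :: "nat \<Rightarrow> real" and B :: real
  assumes nonneg: "\<And>i j. i \<in> states \<Longrightarrow> j \<in> states \<Longrightarrow> i \<noteq> j \<Longrightarrow> q i j \<ge> 0"
  and stable: "\<And>i. i \<in> states \<Longrightarrow> (\<lambda>j. q i j) summable_on (states - {i})"
  and irr: "irreducible_rates q"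
  and gpos: "\<And>n. n \<in> states \<Longrightarrow> g n > 0"
  and gB: "\<And>n. n \<in> states \<Longrightarrow> g n \<le> B"
begin

lemma Qpos: assumes i: "i \<in> states" shows "qtot q i > 0"
proof -
  let ?R = "{(k, l). k \<in> states \<and> l \<in> states \<and> k \<noteq> l \<and> q k l > 0}"
  have "Suc i \<in> states" by (simp add: states_def)
  then have "(i, Suc i) \<in> ?R\<^sup>*" using irr i unfolding irreducible_rates_def by blast
  then obtain y where y: "(i, y) \<in> ?R"
    by (rule converse_rtranclE) auto
  then have y1: "y \<in> states - {i}" "q i y > 0" by auto
  have "infsum (\<lambda>j. q i j) {y} \<le> infsum (\<lambda>j. q i j) (states - {i})"
    by (rule infsum_mono_neutral) (use stable[OF i] y1 nonneg[OF i] in auto)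
  then show ?thesis using y1 by (simp add: qtot_def)
qed

definition pp :: "nat \<Rightarrow> nat \<Rightarrow> real" where
  "pp i j = (if j \<in> states \<and> j \<noteq> i then q i j else 0)"

lemma pp_nonneg: "i \<in> states \<Longrightarrow> pp i j \<ge> 0"
  unfolding pp_def using nonneg by auto

lemma pp_has_sum: assumes i: "i \<in> states" shows "(pp i has_sum qtot q i) UNIV"
proof -
  have "((\<lambda>j. q i j) has_sum qtot q i) (states - {i})"
    unfolding qtot_def by (rule has_sum_infsum[OF stable[OF i]])
  then show ?thesis
    by (subst (asm) has_sum_cong_neutral[where g="pp i" and T=UNIV]) (auto simp: pp_def)
qed

lemma pp_sums: "i \<in> states \<Longrightarrow> pp i sums qtot q i"
  by (rule has_sum_imp_sums[OF pp_has_sum])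

lemma qg_summable: assumes i: "i \<in> states" shows "(\<lambda>j. q i j * g j) summable_on (states - {i})"
proof -
  have "(\<lambda>j. B * q i j) summable_on (states - {i})"
    by (rule summable_on_cmult_right[OF stable[OF i]])
  then show ?thesis
  proof (rule summable_on_comparison_test)
    fix j assume j: "j \<in> states - {i}"
    then have "q i j \<ge> 0" "g j \<le> B" "g j > 0" using nonneg[OF i] gB gpos by auto
    then show "q i j * g j \<le> B * q i j" "0 \<le> q i j * g j"
      by (auto simp: mult.commute intro: mult_right_mono)
  qed
qed

lemma gen_eq: assumes i: "i \<in> states"
  shows "infsum (\<lambda>j. q i j * g j) (states - {i}) = gen q g i + g i * qtot q i"
proof -
  have h1: "((\<lambda>j. q i j * g j) has_sum infsum (\<lambda>j. q i j * g j) (states - {i})) (states - {i})"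
    by (rule has_sum_infsum[OF qg_summable[OF i]])
  have h2: "((\<lambda>j. (- g i) * q i j) has_sum ((- g i) * qtot q i)) (states - {i})"
    unfolding qtot_def by (rule has_sum_cmult_right[OF has_sum_infsum[OF stable[OF i]]])
  have "((\<lambda>j. q i j * g j + (- g i) * q i j) has_sum (infsum (\<lambda>j. q i j * g j) (states - {i}) + (- g i) * qtot q i)) (states - {i})"
    by (rule has_sum_add[OF h1 h2])
  then have "gen q g i = infsum (\<lambda>j. q i j * g j) (states - {i}) + (- g i) * qtot q i"
    unfolding gen_def by (intro infsumI) (simp add: algebra_simps)
  then show ?thesis by simp
qed

lemma ppg_sums: assumes i: "i \<in> states"
  shows "(\<lambda>j. pp i j * g j) sums infsum (\<lambda>j. q i j * g j) (states - {i})"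
proof -
  have "((\<lambda>j. q i j * g j) has_sum infsum (\<lambda>j. q i j * g j) (states - {i})) (states - {i})"
    by (rule has_sum_infsum[OF qg_summable[OF i]])
  then have "((\<lambda>j. pp i j * g j) has_sum infsum (\<lambda>j. q i j * g j) (states - {i})) UNIV"
    by (subst (asm) has_sum_cong_neutral[where g="\<lambda>j. pp i j * g j" and T=UNIV]) (auto simp: pp_def)
  then show ?thesis by (rule has_sum_imp_sums)
qed

definition S :: "nat \<Rightarrow> nat \<Rightarrow> real" where
  "S i n = sum (pp i) {..n}"

lemma S_eq: "(\<Sum>k\<in>{1..n} - {i}. q i k) = S i n"
  unfolding S_def
  by (rule sum.mono_neutral_cong_left) (auto simp: pp_def states_def)

lemma S_mono: "i \<in> states \<Longrightarrow> m \<le> n \<Longrightarrow> S i m \<le> S i n"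
  unfolding S_def by (rule sum_mono2) (auto intro: pp_nonneg)

lemma S_le: "i \<in> states \<Longrightarrow> S i n \<le> qtot q i"
proof -
  assume i: "i \<in> states"
  have sm: "summable (pp i)" using pp_sums[OF i] by (rule sums_summable)
  have "sum (pp i) {..<Suc n} \<le> suminf (pp i)"
    by (rule sum_le_suminf[OF sm]) (use pp_nonneg[OF i] in auto)
  then show ?thesis unfolding S_def lessThan_Suc_atMost sums_unique[OF pp_sums[OF i], symmetric] .
qed

lemma S_lim: "i \<in> states \<Longrightarrow> S i \<longlonglongrightarrow> qtot q i"
proof -
  assume i: "i \<in> states"
  have "(\<lambda>n. sum (pp i) {..<n}) \<longlonglongrightarrow> qtot q i" using pp_sums[OF i] unfolding sums_def .
  then show ?thesis unfolding S_def by (rule LIMSEQ_lessThan_iff_atMost[THEN iffD1])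
qed

lemma S_diff: "S i j - S i (j - 1) = pp i j"
proof (cases j)
  case 0 then show ?thesis by (simp add: S_def pp_def states_def)
next
  case (Suc k) then show ?thesis by (simp add: S_def)
qed

lemma S_0: "S i 0 = 0"
  by (simp add: S_def pp_def states_def)

lemma S_i: "S i i = S i (i - 1)"
  using S_diff[of i i] by (simp add: pp_def)

lemma jump_step_S: "jump_step q i u = (LEAST j. j \<in> states \<and> j \<noteq> i \<and> u * qtot q i < S i j)"
  unfolding jump_step_def S_eq ..

lemma jump_step_props:
  assumes i: "i \<in> states" and u: "0 < u" "u < 1"
  shows "jump_step q i u \<in> states" "jump_step q i u \<noteq> i"
    "u * qtot q i < S i (jump_step q i u)" "S i (jump_step q i u - 1) \<le> u * qtot q i"
proof -
  define Q where "Q = qtot q i"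
  have Q: "Q > 0" using Qpos[OF i] by (simp add: Q_def)
  have uQ: "0 < u * Q" "u * Q < Q" using Q u by auto
  have "eventually (\<lambda>n. u * Q < S i n) sequentially"
    using S_lim[OF i] uQ(2) unfolding Q_def by (rule order_tendstoD)
  then obtain n where n: "u * Q < S i n" by (meson eventually_sequentially order_refl)
  have n0: "n \<noteq> 0"
  proof
    assume "n = 0" then show False using n uQ S_0[of i] by simp
  qed
  define n' where "n' = (if n = i then Suc n else n)"
  have P: "n' \<in> states \<and> n' \<noteq> i \<and> u * Q < S i n'"
  proof -
    have "S i n \<le> S i n'" unfolding n'_def using S_mono[OF i] by auto
    then show ?thesis using n n0 by (auto simp: n'_def states_def)
  qed
  define J where "J = jump_step q i u"
  have J: "J = (LEAST j. j \<in> states \<and> j \<noteq> i \<and> u * Q < S i j)"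
    unfolding J_def jump_step_S Q_def ..
  have PJ: "J \<in> states \<and> J \<noteq> i \<and> u * Q < S i J"
    unfolding J by (rule LeastI[of "\<lambda>j. j \<in> states \<and> j \<noteq> i \<and> u * Q < S i j" n', OF P])
  have notless: "\<not> u * Q < S i k" if "k < J" "k \<in> states" "k \<noteq> i" for k
    using not_less_Least[of k "\<lambda>j. j \<in> states \<and> j \<noteq> i \<and> u * Q < S i j"] that unfolding J by auto
  have "S i (J - 1) \<le> u * Q"
  proof (cases "J - 1 = 0")
    case True then show ?thesis using S_0[of i] uQ by simp
  next
    case False
    show ?thesis
    proof (cases "J - 1 = i")
      case True
      then have "S i (J - 1) = S i (i - 1)" using S_i[of i] by simp
      also have "\<dots> \<le> u * Q"
      proof (cases "i - 1 = 0")
        case True then show ?thesis using S_0[of i] uQ by simp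
      next
        case False
        have "i - 1 < J" "i - 1 \<in> states" "i - 1 \<noteq> i" using True False by (auto simp: states_def)
        then show ?thesis using notless[of "i - 1"] by (meson not_less)
      qed
      finally show ?thesis .
    next
      case False2: False
      have "J - 1 < J" "J - 1 \<in> states" "J - 1 \<noteq> i" using False False2 by (auto simp: states_def)
      then show ?thesis using notless[of "J - 1"] by (meson not_less)
    qed
  qed
  then show "jump_step q i u \<in> states" "jump_step q i u \<noteq> i"
    "u * qtot q i < S i (jump_step q i u)" "S i (jump_step q i u - 1) \<le> u * qtot q i"
    using PJ unfolding J_def Q_def by simp_all
qed

lemma jump_step_iff:
  assumes i: "i \<in> states" and u: "0 < u" "u < 1"
  shows "(S i (j - 1) \<le> u * qtot q i \<and> u * qtot q i < S i j) \<longleftrightarrow> j = jump_step q i u"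
proof -
  note P = jump_step_props[OF assms]
  define J where "J = jump_step q i u"
  show ?thesis
  proof
    assume A: "S i (j - 1) \<le> u * qtot q i \<and> u * qtot q i < S i j"
    show "j = jump_step q i u"
    proof (rule ccontr)
      assume "j \<noteq> jump_step q i u"
      then consider "j < J" | "J < j" unfolding J_def by linarith
      then show False
      proof cases
        case 1
        then have "S i j \<le> S i (J - 1)" using S_mono[OF i, of j "J - 1"] by auto
        then show False using A P(4) unfolding J_def by linarith
      next
        case 2
        then have "S i J \<le> S i (j - 1)" using S_mono[OF i, of J "j - 1"] by auto
        then show False using A P(3) unfolding J_def by linarith
      qed
    qed
  next
    assume "j = jump_step q i u"
    then show "S i (j - 1) \<le> u * qtot q i \<and> u * qtot q i < S i j" using P(3,4) by simp
  qed
qed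

end



lemma AE_unif01: "AE u in unif01. 0 < u \<and> u < 1"
  unfolding unif01_def by (rule AE_uniform_measureI) auto

lemma emeasure_unif01_Ioo: "emeasure lborel {0<..<1::real} = 1"
  by simp

lemma powr_integral:
  fixes r :: real assumes r: "r > 0"
  shows "(\<integral>\<^sup>+v. ennreal (v powr r) \<partial>unif01) = ennreal (1 / (r + 1))"
proof -
  have hi: "((\<lambda>v. v powr r) has_integral (1 / (r + 1))) {0<..<1::real}"
    using has_integral_powr_from_0[of r 1] r
    by (simp add: has_integral_open_interval[of _ _ "0::real" 1, simplified])
  have "(\<integral>\<^sup>+v. ennreal (v powr r) \<partial>unif01) = (\<integral>\<^sup>+v. ennreal (v powr r) * indicator {0<..<1::real} v \<partial>lborel) / emeasure lborel {0<..<1::real}"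
    unfolding unif01_def by (rule nn_integral_uniform_measure) auto
  also have "\<dots> = (\<integral>\<^sup>+v. ennreal (v powr r) * indicator {0<..<1::real} v \<partial>lborel)"
    by (simp add: divide_ennreal_def)
  also have "\<dots> = (\<integral>\<^sup>+v. ennreal (indicator {0<..<1::real} v * v powr r) \<partial>lborel)"
    by (rule nn_integral_cong) (simp split: split_indicator)
  also have "\<dots> = ennreal (1 / (r + 1))"
    by (rule nn_integral_has_integral_lebesgue[OF _ hi]) auto
  finally show ?thesis .
qed

lemma exp_integral:
  fixes Q l :: real assumes Q: "Q > 0" and l: "l > 0"
  shows "(\<integral>\<^sup>+v. ennreal (exp (l * (ln v / Q))) \<partial>unif01) = ennreal (Q / (Q + l))"
proof -
  have "(\<integral>\<^sup>+v. ennreal (exp (l * (ln v / Q))) \<partial>unif01) = (\<integral>\<^sup>+v. ennreal (v powr (l / Q)) \<partial>unif01)"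
  proof (rule nn_integral_cong_AE)
    show "AE v in unif01. ennreal (exp (l * (ln v / Q))) = ennreal (v powr (l / Q))"
      using AE_unif01 by eventually_elim (auto simp: powr_def)
  qed
  also have "\<dots> = ennreal (1 / (l / Q + 1))"
    by (rule powr_integral) (use Q l in simp)
  also have "1 / (l / Q + 1) = Q / (Q + l)"
    using Q by (simp add: field_simps)
  finally show ?thesis .
qed

context chain begin

definition A :: "nat \<Rightarrow> nat \<Rightarrow> real set" where
  "A i j = {u. S i (j - 1) \<le> u * qtot q i \<and> u * qtot q i < S i j}"

lemma A_sets[measurable]: "A i j \<in> sets borel"
proof -
  have "A i j = {u \<in> space borel. S i (j - 1) \<le> u * qtot q i \<and> u * qtot q i < S i j}"
    by (simp add: A_def)
  also have "\<dots> \<in> sets borel" by measurable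
  finally show ?thesis .
qed

lemma A_emeasure: assumes i: "i \<in> states"
  shows "emeasure unif01 (A i j) \<le> ennreal (pp i j / qtot q i)"
proof -
  define Q where "Q = qtot q i"
  have Q: "Q > 0" using Qpos[OF i] by (simp add: Q_def)
  have AI: "A i j = {S i (j - 1) / Q ..< S i j / Q}"
    using Q by (auto simp: A_def Q_def field_simps)
  have le: "S i (j - 1) / Q \<le> S i j / Q"
    using S_mono[OF i, of "j - 1" j] Q by (simp add: divide_right_mono)
  have "emeasure unif01 (A i j) = emeasure lborel ({0<..<1} \<inter> A i j) / emeasure lborel {0<..<1::real}"
    unfolding unif01_def by (rule emeasure_uniform_measure) auto
  also have "\<dots> = emeasure lborel ({0<..<1} \<inter> A i j)"
    by (simp add: divide_ennreal_def)
  also have "\<dots> \<le> emeasure lborel (A i j)"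
    by (rule emeasure_mono) auto
  also have "\<dots> = ennreal (S i j / Q - S i (j - 1) / Q)"
    unfolding AI using le by simp
  also have "S i j / Q - S i (j - 1) / Q = pp i j / Q"
    using S_diff[of i j] by (simp add: diff_divide_distrib[symmetric])
  finally show ?thesis by (simp add: Q_def)
qed

lemma g_integral: assumes i: "i \<in> states"
  shows "(\<integral>\<^sup>+u. ennreal (g (jump_step q i u)) \<partial>unif01)
     \<le> ennreal (infsum (\<lambda>j. q i j * g j) (states - {i}) / qtot q i)"
proof -
  define Q where "Q = qtot q i"
  have Q: "Q > 0" using Qpos[OF i] by (simp add: Q_def)
  have "(\<integral>\<^sup>+u. ennreal (g (jump_step q i u)) \<partial>unif01) =
        (\<integral>\<^sup>+u. (\<Sum>j. ennreal (g j) * indicator (A i j) u) \<partial>unif01)"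
  proof (rule nn_integral_cong_AE)
    show "AE u in unif01. ennreal (g (jump_step q i u)) = (\<Sum>j. ennreal (g j) * indicator (A i j) u)"
      using AE_unif01
    proof eventually_elim
      case (elim u)
      have "(\<lambda>j. ennreal (g j) * indicator (A i j) u) = (\<lambda>j. if j = jump_step q i u then ennreal (g j) else 0)"
        using jump_step_iff[OF i, of u] elim by (auto simp: A_def indicator_def)
      then show ?case using sums_unique[OF sums_single[of "jump_step q i u" "\<lambda>j. ennreal (g j)"]] by simp
    qed
  qed
  also have "\<dots> = (\<Sum>j. (\<integral>\<^sup>+u. ennreal (g j) * indicator (A i j) u \<partial>unif01))"
    by (rule nn_integral_suminf) measurable
  also have "\<dots> = (\<Sum>j. ennreal (g j) * emeasure unif01 (A i j))"
    by (rule suminf_cong, rule nn_integral_cmult_indicator) simp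
  also have "\<dots> \<le> (\<Sum>j. ennreal (g j) * ennreal (pp i j / Q))"
    by (rule suminf_le) (auto intro!: mult_left_mono A_emeasure[OF i, unfolded Q_def[symmetric]])
  also have "\<dots> = (\<Sum>j. ennreal (pp i j * g j / Q))"
  proof (rule suminf_cong)
    fix j
    show "ennreal (g j) * ennreal (pp i j / Q) = ennreal (pp i j * g j / Q)"
    proof (cases "j \<in> states \<and> j \<noteq> i")
      case True
      then have "g j \<ge> 0" "pp i j / Q \<ge> 0" using gpos pp_nonneg[OF i] Q by (auto intro: less_imp_le)
      then show ?thesis by (simp add: ennreal_mult[symmetric] algebra_simps)
    next
      case False
      have "pp i j = 0" unfolding pp_def if_not_P[OF False] ..
      then show ?thesis by simp
    qed
  qed
  also have "\<dots> = ennreal (\<Sum>j. pp i j * g j / Q)"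
  proof (rule suminf_ennreal2)
    show "0 \<le> pp i j * g j / Q" for j
      using pp_nonneg[OF i, of j] gpos[of j] Q by (cases "j \<in> states") (auto simp: pp_def)
    show "summable (\<lambda>j. pp i j * g j / Q)"
      using ppg_sums[OF i] by (intro summable_divide sums_summable)
  qed
  also have "(\<Sum>j. pp i j * g j / Q) = infsum (\<lambda>j. q i j * g j) (states - {i}) / Q"
    using sums_unique[OF sums_divide[OF ppg_sums[OF i], of Q]] by simp
  finally show ?thesis by (simp add: Q_def)
qed

end




lemma AE_pair01: "AE x in unif01 \<Otimes>\<^sub>M unif01. (0 < fst x \<and> fst x < 1) \<and> (0 < snd x \<and> snd x < 1)"
proof -
  interpret P: prob_space unif01 by (rule prob_unif01)
  interpret PP: pair_sigma_finite unif01 unif01 ..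
  show ?thesis
  proof (rule PP.AE_pair_measure)
    show "{x \<in> space (unif01 \<Otimes>\<^sub>M unif01). (0 < fst x \<and> fst x < 1) \<and> (0 < snd x \<and> snd x < 1)} \<in> sets (unif01 \<Otimes>\<^sub>M unif01)"
      by measurable
    show "AE x in unif01. AE y in unif01. (0 < fst (x, y) \<and> fst (x, y) < 1) \<and> (0 < snd (x, y) \<and> snd (x, y) < 1)"
      using AE_unif01 by eventually_elim (use AE_unif01 in auto)
  qed
qed

lemma product_integral:
  fixes G H :: "real \<Rightarrow> ennreal"
  assumes [measurable]: "G \<in> borel_measurable borel" "H \<in> borel_measurable borel"
  shows "(\<integral>\<^sup>+x. C * G (fst x) * H (snd x) \<partial>(unif01 \<Otimes>\<^sub>M unif01)) =
         C * (\<integral>\<^sup>+u. G u \<partial>unif01) * (\<integral>\<^sup>+v. H v \<partial>unif01)"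
proof -
  interpret P: prob_space unif01 by (rule prob_unif01)
  interpret PP: pair_sigma_finite unif01 unif01 ..
  have "(\<integral>\<^sup>+x. C * G (fst x) * H (snd x) \<partial>(unif01 \<Otimes>\<^sub>M unif01)) =
        (\<integral>\<^sup>+u. \<integral>\<^sup>+v. C * G u * H v \<partial>unif01 \<partial>unif01)"
  proof -
    have m: "(\<lambda>x. C * G (fst x) * H (snd x)) \<in> borel_measurable (unif01 \<Otimes>\<^sub>M unif01)" by measurable
    show ?thesis using P.nn_integral_fst[OF m] by simp
  qed
  also have "\<dots> = (\<integral>\<^sup>+u. C * G u * (\<integral>\<^sup>+v. H v \<partial>unif01) \<partial>unif01)"
    by (rule nn_integral_cong) (simp add: nn_integral_cmult)
  also have "\<dots> = C * (\<integral>\<^sup>+u. G u \<partial>unif01) * (\<integral>\<^sup>+v. H v \<partial>unif01)"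
    by (simp add: nn_integral_cmult nn_integral_multc)
  finally show ?thesis .
qed

lemma one_le_bnd:
  assumes "0 < s" "l > 0" "c > 0" "c \<le> g" 
  shows "1 \<le> ennreal (if s \<le> 0 then 0 else exp (l * s) * g / c)"
proof -
  have "1 \<le> exp (l * s)" using assms by simp
  moreover have "1 \<le> g / c" using assms by simp
  ultimately have "1 * 1 \<le> exp (l * s) * (g / c)" by (intro mult_mono) auto
  then show ?thesis using assms by simp
qed

context chain begin

lemma E_bound:
  fixes a :: nat and l c :: real
  assumes drift_a: "\<And>n. n \<in> states \<Longrightarrow> n > a \<Longrightarrow> gen q g n \<le> l * g n"
    and l: "l > 0" and c: "c > 0" and cg: "\<And>j. j \<in> states \<Longrightarrow> j \<le> a \<Longrightarrow> c \<le> g j"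
  shows "i \<in> states \<Longrightarrow> emeasure path_space (E q a m i s) \<le> ennreal (if s \<le> 0 then 0 else exp (l * s) * g i / c)"
proof (induction m arbitrary: i s)
  case 0
  have S1: "emeasure path_space UNIV = 1"
    using prob_space.emeasure_space_1[OF prob_path] by simp
  show ?case
  proof (cases "i \<le> a \<and> 0 < s")
    case True
    then have "E q a 0 i s = UNIV" by (auto simp: E_def jump_time_def)
    then show ?thesis using S1 one_le_bnd[of s l c "g i"] True l c cg[OF 0] by simp
  next
    case False
    then have "E q a 0 i s = {}" by (auto simp: E_def jump_time_def)
    then show ?thesis by simp
  qed
next
  case (Suc m)
  note i = Suc.prems
  define Q where "Q = qtot q i"
  have Q: "Q > 0" using Qpos[OF i] by (simp add: Q_def)
  have S1: "emeasure path_space UNIV = 1"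
    using prob_space.emeasure_space_1[OF prob_path] by simp
  show ?case
  proof (cases "i \<le> a \<and> 0 < s")
    case True
    have "emeasure path_space (E q a (Suc m) i s) \<le> 1"
      by (rule prob_space.emeasure_le_1[OF prob_path])
    then show ?thesis using one_le_bnd[of s l c "g i"] True l c cg[OF i] by (meson order.trans)
  next
    case False
    have rec: "emeasure path_space (E q a (Suc m) i s) =
      (\<integral>\<^sup>+x. emeasure path_space (E q a m (jump_step q i (fst x)) (s + ln (snd x) / Q)) \<partial>(unif01 \<Otimes>\<^sub>M unif01))"
      unfolding E_rec if_not_P[OF False] Q_def ..
    show ?thesis
    proof (cases "s \<le> 0")
      case True
      have "emeasure path_space (E q a (Suc m) i s) \<le> (\<integral>\<^sup>+x. 0 \<partial>(unif01 \<Otimes>\<^sub>M unif01))"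
        unfolding rec
      proof (rule nn_integral_mono_AE)
        show "AE x in unif01 \<Otimes>\<^sub>M unif01. emeasure path_space (E q a m (jump_step q i (fst x)) (s + ln (snd x) / Q)) \<le> 0"
          using AE_pair01
        proof eventually_elim
          case (elim x)
          have J: "jump_step q i (fst x) \<in> states" using jump_step_props[OF i] elim by auto
          have "ln (snd x) < 0" using elim by simp
          then have "ln (snd x) / Q < 0" using Q by (simp add: divide_neg_pos)
          then have "s + ln (snd x) / Q \<le> 0" using True by linarith
          then show ?case using Suc.IH[OF J, of "s + ln (snd x) / Q"] by simp
        qed
      qed
      then show ?thesis using True by simp
    next
      case s: False
      have ia: "i > a" using False s by auto
      define C where "C = ennreal (exp (l * s) / c)"
      define G where "G = (\<lambda>u. ennreal (g (jump_step q i u)))"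
      define H where "H = (\<lambda>v. ennreal (exp (l * (ln v / Q))))"
      have Gm[measurable]: "G \<in> borel_measurable borel" unfolding G_def by measurable
      have Hm[measurable]: "H \<in> borel_measurable borel" unfolding H_def by measurable
      have "emeasure path_space (E q a (Suc m) i s) \<le> (\<integral>\<^sup>+x. C * G (fst x) * H (snd x) \<partial>(unif01 \<Otimes>\<^sub>M unif01))"
        unfolding rec
      proof (rule nn_integral_mono_AE)
        show "AE x in unif01 \<Otimes>\<^sub>M unif01. emeasure path_space (E q a m (jump_step q i (fst x)) (s + ln (snd x) / Q)) \<le> C * G (fst x) * H (snd x)"
          using AE_pair01
        proof eventually_elim
          case (elim x)
          define J where "J = jump_step q i (fst x)"
          have J: "J \<in> states" using jump_step_props[OF i] elim by (auto simp: J_def)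
          have gJ: "g J > 0" using gpos[OF J] .
          have "emeasure path_space (E q a m J (s + ln (snd x) / Q)) \<le> ennreal (if s + ln (snd x) / Q \<le> 0 then 0 else exp (l * (s + ln (snd x) / Q)) * g J / c)"
            by (rule Suc.IH[OF J])
          also have "\<dots> \<le> ennreal (exp (l * (s + ln (snd x) / Q)) * g J / c)"
            using gJ c by (intro ennreal_leI) auto
          also have "exp (l * (s + ln (snd x) / Q)) * g J / c = (exp (l * s) / c) * g J * exp (l * (ln (snd x) / Q))"
            by (simp add: distrib_left exp_add field_simps)
          also have "ennreal \<dots> = C * G (fst x) * H (snd x)"
            unfolding C_def G_def H_def J_def[symmetric] using gJ c
            by (simp add: ennreal_mult[symmetric])
          finally show ?case unfolding J_def .
        qed
      qed
      also have "\<dots> = C * (\<integral>\<^sup>+u. G u \<partial>unif01) * (\<integral>\<^sup>+v. H v \<partial>unif01)"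
        by (rule product_integral) (fact Gm, fact Hm)
      also have "\<dots> \<le> C * ennreal (infsum (\<lambda>j. q i j * g j) (states - {i}) / Q) * ennreal (Q / (Q + l))"
      proof -
        have "(\<integral>\<^sup>+u. G u \<partial>unif01) \<le> ennreal (infsum (\<lambda>j. q i j * g j) (states - {i}) / Q)"
          unfolding G_def Q_def by (rule g_integral[OF i])
        moreover have "(\<integral>\<^sup>+v. H v \<partial>unif01) = ennreal (Q / (Q + l))"
          unfolding H_def by (rule exp_integral[OF Q l])
        ultimately show ?thesis by (auto intro!: mult_mono)
      qed
      also have "\<dots> \<le> C * ennreal ((l + Q) * g i / Q) * ennreal (Q / (Q + l))"
      proof -
        have "infsum (\<lambda>j. q i j * g j) (states - {i}) \<le> (l + Q) * g i"
          using gen_eq[OF i] drift_a[OF i ia] unfolding Q_def by (simp add: algebra_simps)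
        then have "infsum (\<lambda>j. q i j * g j) (states - {i}) / Q \<le> (l + Q) * g i / Q"
          using Q by (simp add: divide_right_mono)
        then show ?thesis by (auto intro!: mult_mono ennreal_leI)
      qed
      also have "\<dots> = ennreal (exp (l * s) * g i / c)"
      proof -
        have p: "0 \<le> exp (l * s) / c" "0 \<le> (l + Q) * g i / Q" "0 \<le> Q / (Q + l)"
          using c Q l gpos[OF i] by auto
        have "C * ennreal ((l + Q) * g i / Q) * ennreal (Q / (Q + l)) =
              ennreal (exp (l * s) / c * ((l + Q) * g i / Q) * (Q / (Q + l)))"
          unfolding C_def using p
          by (simp only: ennreal_mult[OF p(1) p(2), symmetric] ennreal_mult[OF mult_nonneg_nonneg[OF p(1) p(2)] p(3), symmetric])
        also have "exp (l * s) / c * ((l + Q) * g i / Q) * (Q / (Q + l)) = exp (l * s) * g i / c"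
        proof -
          have pos: "Q * Q + Q * l > 0" using Q l by (simp add: add_pos_pos)
          have h: "((l + Q) / Q) * (Q / (Q + l)) = 1" using Q l pos by (simp add: field_simps)
          have "exp (l * s) / c * ((l + Q) * g i / Q) * (Q / (Q + l)) = (exp (l * s) * g i / c) * (((l + Q) / Q) * (Q / (Q + l)))"
            by simp
          then show ?thesis unfolding h by simp
        qed
        finally show ?thesis .
      qed
      finally show ?thesis using s by simp
    qed
  qed
qed

end




lemma measure_le_from_emeasure:
  assumes "emeasure M A \<le> ennreal x" "0 \<le> x"
  shows "measure M A \<le> x"
proof -
  have "enn2real (emeasure M A) \<le> enn2real (ennreal x)"
    by (rule enn2real_mono[OF assms(1)]) simp
  then show ?thesis using assms(2) by (simp add: measure_def)
qed

lemma measure_mono_sets: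
  assumes "finite_measure M" "X \<subseteq> Y" "Y \<in> sets M"
  shows "measure M X \<le> measure M Y"
proof (cases "X \<in> sets M")
  case True then show ?thesis using assms by (intro finite_measure.finite_measure_mono) auto
next
  case False then show ?thesis by (simp add: measure_notin_sets)
qed

theorem proposition4p3:
  fixes q :: "nat \<Rightarrow> nat \<Rightarrow> real" and g d :: "nat \<Rightarrow> real"
  assumes rates_nonneg: "\<And>i j. i \<in> states \<Longrightarrow> j \<in> states \<Longrightarrow> i \<noteq> j \<Longrightarrow> q i j \<ge> 0"
    and rates_stable: "\<And>i. i \<in> states \<Longrightarrow> (\<lambda>j. q i j) summable_on (states - {i})"
    and irred: "irreducible_rates q"
    and g_pos: "\<And>n. n \<in> states \<Longrightarrow> g n > 0"
    and g_bdd: "\<exists>B. \<forall>n\<in>states. g n \<le> B"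
    and g_lim: "g \<longlonglongrightarrow> 0"
    and d_pos: "\<exists>N. \<forall>n\<in>states. n \<ge> N \<longrightarrow> d n > 0"
    and drift: "\<exists>A. \<forall>a\<in>states. a \<ge> A \<longrightarrow> (\<forall>n\<in>states. n > a \<longrightarrow> gen q g n \<le> d a * g n)"
  shows "\<forall>a t. a > 0 \<and> t > 0 \<longrightarrow>
           (\<lambda>n. measure path_space (hit_below_event q n a t)) \<longlonglongrightarrow> 0"
proof (intro allI impI)
  fix a t :: real assume at: "a > 0 \<and> t > 0"
  obtain B where B: "\<forall>n\<in>states. g n \<le> B" using g_bdd by blast
  obtain N where N: "\<forall>n\<in>states. n \<ge> N \<longrightarrow> d n > 0" using d_pos by blast
  obtain A where A: "\<forall>a\<in>states. a \<ge> A \<longrightarrow> (\<forall>n\<in>states. n > a \<longrightarrow> gen q g n \<le> d a * g n)"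
    using drift by blast
  interpret chain q g B
    by unfold_locales (use rates_nonneg rates_stable irred g_pos B in auto)
  define a' where "a' = max (nat \<lceil>a\<rceil>) (max N (max A 1))"
  have a'st: "a' \<in> states" by (simp add: a'_def states_def)
  have aa': "a \<le> real a'"
  proof -
    have "a \<le> real (nat \<lceil>a\<rceil>)" by linarith
    also have "\<dots> \<le> real a'" unfolding a'_def by simp
    finally show ?thesis .
  qed
  define l where "l = d a'"
  have l: "l > 0" using N a'st unfolding l_def a'_def by auto
  have drift_a: "\<And>n. n \<in> states \<Longrightarrow> n > a' \<Longrightarrow> gen q g n \<le> l * g n"
    using A a'st unfolding l_def by (auto simp: a'_def)
  define c where "c = Min (g ` {1..a'})"
  have fin: "finite (g ` {1..a'})" "g ` {1..a'} \<noteq> {}" using a'st by (auto simp: states_def)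
  have c: "c > 0" unfolding c_def using fin g_pos by (subst Min_gr_iff) (auto simp: states_def)
  have cg: "\<And>j. j \<in> states \<Longrightarrow> j \<le> a' \<Longrightarrow> c \<le> g j"
    unfolding c_def using fin by (intro Min_le) (auto simp: states_def)
  define K where "K = exp (l * t) / c"
  have bound: "measure path_space (hit_below_event q n a t) \<le> K * g n" if n: "n \<in> states" for n
  proof -
    have sub: "hit_below_event q n a t \<subseteq> (\<Union>m. E q a' m n t)"
    proof
      fix \<omega> assume "\<omega> \<in> hit_below_event q n a t"
      then obtain k where k: "real (jump_chain q n \<omega> k) \<le> a" "jump_time q n \<omega> k < t"
        unfolding hit_below_event_def by blast
      have "jump_chain q n \<omega> k \<le> a'" using k(1) aa' by linarith
      then have "\<omega> \<in> E q a' k n t" using k(2) by (auto simp: E_def)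
      then show "\<omega> \<in> (\<Union>m. E q a' m n t)" by blast
    qed
    have inc: "incseq (\<lambda>m. E q a' m n t)"
      by (rule incseq_SucI) (auto simp: E_def intro: le_SucI)
    have "emeasure path_space (\<Union>m. E q a' m n t) = (SUP m. emeasure path_space (E q a' m n t))"
      by (rule SUP_emeasure_incseq[symmetric]) (use inc in auto)
    also have "\<dots> \<le> ennreal (if t \<le> 0 then 0 else exp (l * t) * g n / c)"
      by (rule SUP_least, rule E_bound[OF drift_a l c cg n]) auto
    also have "\<dots> = ennreal (K * g n)" using at by (simp add: K_def)
    finally have em: "emeasure path_space (\<Union>m. E q a' m n t) \<le> ennreal (K * g n)" .
    have K0: "0 \<le> K * g n" using c g_pos[OF n] by (simp add: K_def)
    have "measure path_space (hit_below_event q n a t) \<le> measure path_space (\<Union>m. E q a' m n t)"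
      by (rule measure_mono_sets[OF _ sub])
         (use prob_path in \<open>auto simp: prob_space_def\<close>)
    also have "\<dots> \<le> K * g n" by (rule measure_le_from_emeasure[OF em K0])
    finally show ?thesis .
  qed
  have lim: "(\<lambda>n. K * g n) \<longlonglongrightarrow> 0"
    using tendsto_mult_left[OF g_lim, of K] by simp
  show "(\<lambda>n. measure path_space (hit_below_event q n a t)) \<longlonglongrightarrow> 0"
  proof (rule tendsto_sandwich[OF _ _ tendsto_const lim])
    show "\<forall>\<^sub>F n in sequentially. 0 \<le> measure path_space (hit_below_event q n a t)"
      by simp
    show "\<forall>\<^sub>F n in sequentially. measure path_space (hit_below_event q n a t) \<le> K * g n"
      using eventually_ge_at_top[of "1::nat"] by eventually_elim (rule bound, simp add: states_def)
  qed
qed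


end
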